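(* Assume $V$ satisfies Assumptions A1 and A2, let $\delta$ satisfy the step-size condition (S), and let $c=(1-\gamma\delta/2)/(1-\gamma\delta)$. Realize the underdamped Langevin algorithm through an $r$-dimensional standard Brownian motion $B$ via $\eta_k=(B((k+1)\delta)-B(k\delta))/\sqrt\delta$, let $\tau_k=(1-\gamma\delta)\rho_k-\delta\nabla V(\xi_k)$, and for $t\in[k\delta,(k+1)\delta]$ let $R_k(t)=\tau_k+\sqrt{2\gamma}\,(B(t)-B(k\delta))$ (so $\rho_{k+1}=R_k((k+1)\delta)$). Fix an integer $l>0$. Then there is a constant $C_2=C_2(l,\delta)>0$ such that for all $k\ge0$ and all $t\in[k\delta,(k+1)\delta]$, \[ \mathbb{E}\left[\{\Gamma_c(\xi_{k+1},R_k(t))\}^l\right]\le\mathbb{E}\left[\{\Gamma_c(\xi_{k+1},\tau_k)\}^l\right]+C_2\sum_{i=0}^{l-1}(t-k\delta)^{l-i}\,\mathbb{E}\left[\{\Gamma_c(\xi_{k+1},\tau_k)\}^i\right]. \]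
   Context: Fix integers $r\ge1$ and a constant $\gamma>0$. A map has polynomial growth if $\Vert\phi(x)\Vert\le C(1+\Vert x\Vert^m)$ for some $C>0$, integer $m\ge0$ and all $x$; $\mathscr{C}^\infty_{poly}$ denotes infinitely differentiable maps with the map and all derivatives of polynomial growth. Norms of matrices are operator norms. Assumption A1: (a) $V(x)\ge0$ for all $x\in\mathbb{R}^r$; (b) $\Vert\nabla^2V(x)\Vert\le\nu$ for some constant $\nu>0$ and all $x$; (c) $V\in\mathscr{C}^\infty_{poly}$. Assumption A2: there exist constants $\alpha>0$ and $0<\beta<1$ such that for all $x\in\mathbb{R}^r$, $\frac12\langle\nabla V(x),x\rangle\ge\beta V(x)+\gamma^2C_\beta\Vert x\Vert^2-\alpha$, where $C_\beta=\frac{\beta(2-\beta)}{8(1-\beta)}$. Step-size condition (S): $0<\delta\le\min\{1/\gamma,\ \gamma/(2\nu),\ (D+1-\sqrt{D^2+1})/\gamma\}$ with $D=\gamma^4C_\beta/\nu^2$. Underdamped Langevin algorithm: $\xi_{k+1}=\xi_k+\delta\rho_k$, $\rho_{k+1}=(1-\gamma\delta)\rho_k-\delta\nabla V(\xi_k)+\sqrt{2\gamma\delta}\,\eta_k$, with deterministic initial values $\xi_0,\rho_0$. For $c>1$ and $x,y\in\mathbb{R}^r$, $\Gamma_c(x,y)=\frac{\gamma^2}{4}\Vert x\Vert^2+V(x)+\frac{\gamma}{2}\langle x,y\rangle+\frac c2\Vert y\Vert^2+1$. *)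

theory Defs
  imports "HOL-Probability.Probability"
begin

definition poly_growth :: "(real^'n \<Rightarrow> real) \<Rightarrow> bool" where
  "poly_growth f \<longleftrightarrow> (\<exists>C>0. \<exists>m::nat. \<forall>x. \<bar>f x\<bar> \<le> C * (1 + norm x ^ m))"

definition partial_dir :: "'n::finite \<Rightarrow> (real^'n \<Rightarrow> real) \<Rightarrow> real^'n \<Rightarrow> real" where
  "partial_dir i f x = deriv (\<lambda>s. f (x + s *\<^sub>R axis i 1)) 0"

fun iter_partial :: "'n::finite list \<Rightarrow> (real^'n \<Rightarrow> real) \<Rightarrow> real^'n \<Rightarrow> real" where
  "iter_partial [] f = f"
| "iter_partial (i # is) f = partial_dir i (iter_partial is f)"

text \<open>f is infinitely (Frechet) differentiable and f and all its derivatives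
  (equivalently all iterated partial derivatives) have polynomial growth.\<close>
definition C_inf_poly :: "(real^'n::finite \<Rightarrow> real) \<Rightarrow> bool" where
  "C_inf_poly f \<longleftrightarrow>
     (\<forall>is. \<forall>x. iter_partial is f differentiable (at x)) \<and>
     (\<forall>is. poly_growth (iter_partial is f))"

definition C_beta :: "real \<Rightarrow> real" where
  "C_beta \<beta> = \<beta> * (2 - \<beta>) / (8 * (1 - \<beta>))"

definition D_const :: "real \<Rightarrow> real \<Rightarrow> real \<Rightarrow> real" where
  "D_const \<gamma> \<nu> \<beta> = \<gamma> ^ 4 * C_beta \<beta> / \<nu>\<^sup>2"

definition Gamma_c :: "(real^'n \<Rightarrow> real) \<Rightarrow> real \<Rightarrow> real \<Rightarrow> real^'n \<Rightarrow> real^'n \<Rightarrow> real" where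
  "Gamma_c V \<gamma> c x y =
     \<gamma>\<^sup>2 / 4 * (norm x)\<^sup>2 + V x + \<gamma> / 2 * (x \<bullet> y) + c / 2 * (norm y)\<^sup>2 + 1"

definition gauss_density :: "real \<Rightarrow> real^'n::finite \<Rightarrow> real" where
  "gauss_density s x = (\<Prod>i\<in>UNIV. normal_density 0 (sqrt s) (x $ i))"

definition std_brownian_motion :: "'a measure \<Rightarrow> (real \<Rightarrow> 'a \<Rightarrow> real^'n::finite) \<Rightarrow> bool" where
  "std_brownian_motion M B \<longleftrightarrow>
     prob_space M \<and>
     (\<forall>t\<ge>0. B t \<in> borel_measurable M) \<and>
     (AE \<omega> in M. B 0 \<omega> = 0) \<and>
     (AE \<omega> in M. continuous_on {0..} (\<lambda>t. B t \<omega>)) \<and>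
     (\<forall>s t. 0 \<le> s \<and> s < t \<longrightarrow>
        distributed M lborel (\<lambda>\<omega>. B t \<omega> - B s \<omega>) (\<lambda>x. ennreal (gauss_density (t - s) x))) \<and>
     (\<forall>(ts::nat \<Rightarrow> real) n. 0 \<le> ts 0 \<and> (\<forall>i<n. ts i \<le> ts (Suc i)) \<longrightarrow>
        prob_space.indep_vars M (\<lambda>_. borel) (\<lambda>i \<omega>. B (ts (Suc i)) \<omega> - B (ts i) \<omega>) {..<n})"

fun ula :: "(real^'n \<Rightarrow> real^'n) \<Rightarrow> real \<Rightarrow> real \<Rightarrow> real^'n \<Rightarrow> real^'n
            \<Rightarrow> (real \<Rightarrow> 'a \<Rightarrow> real^'n) \<Rightarrow> nat \<Rightarrow> 'a \<Rightarrow> (real^'n) \<times> (real^'n)" where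
  "ula gV \<gamma> \<delta> x0 p0 B 0 \<omega> = (x0, p0)"
| "ula gV \<gamma> \<delta> x0 p0 B (Suc k) \<omega> =
     (let xk = fst (ula gV \<gamma> \<delta> x0 p0 B k \<omega>);
          pk = snd (ula gV \<gamma> \<delta> x0 p0 B k \<omega>);
          \<eta> = (1 / sqrt \<delta>) *\<^sub>R (B ((real k + 1) * \<delta>) \<omega> - B (real k * \<delta>) \<omega>)
      in (xk + \<delta> *\<^sub>R pk,
          (1 - \<gamma> * \<delta>) *\<^sub>R pk - \<delta> *\<^sub>R gV xk + sqrt (2 * \<gamma> * \<delta>) *\<^sub>R \<eta>))"

end

theory Submission
  imports Defs
begin



definition TT :: "real \<Rightarrow> real \<Rightarrow> nat \<Rightarrow> real" where
  "TT G e l = (\<Sum>i<l. G^i * e^(l-i))"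

lemma TT_Suc: "TT G e (Suc l) = e * (G^l + TT G e l)"
proof -
  have "TT G e (Suc l) = G^l * e + (\<Sum>i<l. G^i * e^(Suc l-i))" by (simp add: TT_def)
  also have "(\<Sum>i<l. G^i * e^(Suc l-i)) = e * TT G e l"
    unfolding TT_def sum_distrib_left
    by (intro sum.cong) (auto simp: Suc_diff_le)
  finally show ?thesis by (simp add: algebra_simps)
qed

lemma TT_nonneg: "G \<ge> 0 \<Longrightarrow> e \<ge> 0 \<Longrightarrow> TT G e l \<ge> 0"
  unfolding TT_def by (intro sum_nonneg) auto

lemma TT_G: assumes "G \<ge> 0" "e \<ge> 0" shows "G * TT G e l \<le> TT G e (Suc l)"
proof -
  have "TT G e (Suc l) = e^(Suc l) + (\<Sum>i<l. G^(Suc i) * e^(Suc l - Suc i))"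
    unfolding TT_def by (subst sum.lessThan_Suc_shift) simp
  also have "(\<Sum>i<l. G^(Suc i) * e^(Suc l - Suc i)) = G * TT G e l"
    unfolding TT_def sum_distrib_left by (simp add: algebra_simps)
  finally show ?thesis using assms by simp
qed

lemma TT_e: assumes "G \<ge> 0" "e \<ge> 0" shows "e * TT G e l \<le> TT G e (Suc l)"
  using assms by (simp add: TT_Suc algebra_simps)

lemma alg_main:
  fixes G e q a :: real
  assumes G: "G \<ge> 0" and e: "e \<ge> 0" and q: "0 \<le> q" "q \<le> e" and a: "a^2 \<le> G * e"
  shows "((G+q+a)^l + (G+q-a)^l)/2 \<le> G^l + 4^l * TT G e l \<and>
         a * (((G+q+a)^l - (G+q-a)^l)/2) \<le> 4^l * TT G e (Suc l)"
proof (induction l)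
  case 0
  then show ?case using TT_nonneg[OF G e, of 1] by (simp add: TT_def)
next
  case (Suc l)
  define P where "P = G + q"
  define p where "p = ((P+a)^l + (P-a)^l)/2"
  define odd_part where "odd_part = a * (((P+a)^l - (P-a)^l)/2)"
  have P0: "P \<ge> 0" and Pl: "P \<le> G + e" using G q by (auto simp: P_def)
  have T0: "TT G e l \<ge> 0" "TT G e (Suc l) \<ge> 0" "TT G e (Suc (Suc l)) \<ge> 0"
    using TT_nonneg[OF G e] by auto
  have hp: "p \<le> G^l + 4^l * TT G e l" and ho: "odd_part \<le> 4^l * TT G e (Suc l)"
    using Suc by (auto simp: p_def odd_part_def P_def)
  have rec1: "((P+a)^Suc l + (P-a)^Suc l)/2 = P * p + odd_part"
    unfolding p_def odd_part_def power_Suc by (simp add: field_simps)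
  have rec2: "a * (((P+a)^Suc l - (P-a)^Suc l)/2) = P * odd_part + a^2 * p"
    unfolding p_def odd_part_def power_Suc by (simp add: field_simps power2_eq_square)
  have GT1: "G * TT G e l \<le> TT G e (Suc l)" "e * TT G e l \<le> TT G e (Suc l)"
    using TT_G[OF G e] TT_e[OF G e] by auto
  have GT2: "G * TT G e (Suc l) \<le> TT G e (Suc (Suc l))" "e * TT G e (Suc l) \<le> TT G e (Suc (Suc l))"
    using TT_G[OF G e] TT_e[OF G e] by auto
  have E1: "e * G^l \<le> TT G e (Suc l)" using TT_Suc[of G e l] e T0 by (simp add: algebra_simps)
  have E2: "e * G^Suc l \<le> TT G e (Suc (Suc l))" using TT_Suc[of G e "Suc l"] e T0 by (simp add: algebra_simps)
  have "P * p \<le> P * (G^l + 4^l * TT G e l)" using hp P0 by (rule mult_left_mono)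
  also have "\<dots> \<le> (G + e) * (G^l + 4^l * TT G e l)"
    using Pl T0 G by (intro mult_right_mono) auto
  also have "\<dots> = G^Suc l + e * G^l + 4^l * (G * TT G e l) + 4^l * (e * TT G e l)"
    by (simp add: algebra_simps)
  also have "\<dots> \<le> G^Suc l + TT G e (Suc l) + 4^l * TT G e (Suc l) + 4^l * TT G e (Suc l)"
    using E1 GT1 by (intro add_mono mult_left_mono) auto
  finally have A1: "P * p \<le> G^Suc l + TT G e (Suc l) + 2 * 4^l * TT G e (Suc l)" by (simp add: algebra_simps)
  have c1: "((P+a)^Suc l + (P-a)^Suc l)/2 \<le> G^Suc l + 4^Suc l * TT G e (Suc l)"
  proof -
    have "TT G e (Suc l) \<le> 4^l * TT G e (Suc l)" using T0 by (simp add: mult_le_cancel_right1)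
    then show ?thesis using A1 ho rec1 by simp
  qed
  have "P * odd_part \<le> P * (4^l * TT G e (Suc l))" using ho P0 by (rule mult_left_mono)
  also have "\<dots> \<le> (G + e) * (4^l * TT G e (Suc l))"
    using Pl T0 by (intro mult_right_mono) auto
  also have "\<dots> = 4^l * (G * TT G e (Suc l)) + 4^l * (e * TT G e (Suc l))"
    by (simp add: algebra_simps)
  also have "\<dots> \<le> 4^l * TT G e (Suc (Suc l)) + 4^l * TT G e (Suc (Suc l))"
    using GT2 by (intro add_mono mult_left_mono) auto
  finally have B1: "P * odd_part \<le> 2 * 4^l * TT G e (Suc (Suc l))" by (simp add: algebra_simps)
  have "a^2 * p \<le> a^2 * (G^l + 4^l * TT G e l)" using hp by (intro mult_left_mono) auto
  also have "\<dots> \<le> (G * e) * (G^l + 4^l * TT G e l)"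
    using a T0 G by (intro mult_right_mono) auto
  also have "\<dots> = e * G^Suc l + 4^l * (e * (G * TT G e l))"
    by (simp add: algebra_simps)
  also have "\<dots> \<le> TT G e (Suc (Suc l)) + 4^l * TT G e (Suc (Suc l))"
  proof -
    have "e * (G * TT G e l) \<le> e * TT G e (Suc l)" using GT1 e by (intro mult_left_mono) auto
    also have "\<dots> \<le> TT G e (Suc (Suc l))" using GT2 by simp
    finally show ?thesis using E2 by (intro add_mono mult_left_mono) auto
  qed
  finally have B2: "a^2 * p \<le> TT G e (Suc (Suc l)) + 4^l * TT G e (Suc (Suc l))" .
  have c2: "a * (((P+a)^Suc l - (P-a)^Suc l)/2) \<le> 4^Suc l * TT G e (Suc (Suc l))"
  proof -
    have "TT G e (Suc (Suc l)) \<le> 4^l * TT G e (Suc (Suc l))" using T0 by (simp add: mult_le_cancel_right1)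
    then show ?thesis using B1 B2 rec2 by simp
  qed
  show ?case using c1 c2 by (simp add: P_def)
qed




lemma pow_le_fact_exp: assumes "(y::real) \<ge> 0" shows "y ^ n \<le> fact n * exp y"
proof -
  have s: "summable (\<lambda>n. y^n /\<^sub>R fact n)" using exp_converges[of y] by (simp add: sums_iff)
  have "(\<Sum>i\<in>{n}. y^i /\<^sub>R fact i) \<le> (\<Sum>i. y^i /\<^sub>R fact i)"
    using assms by (intro sum_le_suminf[OF s]) auto
  also have "\<dots> = exp y" using exp_converges[of y] by (simp add: sums_iff)
  finally have "y^n / fact n \<le> exp y" by (simp add: divide_inverse mult.commute)
  then show ?thesis by (simp add: field_simps)
qed

lemma gauss_even: "gauss_density s (-w) = gauss_density s w"
  unfolding gauss_density_def normal_density_def by simp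

lemma gauss_nonneg: "0 \<le> gauss_density s w"
  unfolding gauss_density_def by (intro prod_nonneg) (simp add: normal_density_nonneg)

lemma norm_vec_sq: "(norm (w::real^'n))^2 = (\<Sum>i\<in>UNIV. (w$i)^2)"
  unfolding power2_norm_eq_inner inner_vec_def by (simp add: power2_eq_square)

lemma normal_exp: assumes "s > 0"
  shows "normal_density 0 (sqrt s) x * exp (x^2/(4 * s)) = sqrt 2 * normal_density 0 (sqrt (2 * s)) x"
proof -
  have e: "exp (-(x^2) / (2 * s)) * exp (x^2/(4 * s)) = exp (-(x^2)/(4 * s))"
    by (simp add: exp_add[symmetric] field_simps)
  have r: "sqrt (pi * (s * 4)) = sqrt 2 * sqrt (pi * (s * 2))"
  proof -
    have "sqrt 2 * sqrt (pi * (s * 2)) = sqrt (2 * (pi * (s * 2)))" by (simp only: real_sqrt_mult)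
    then show ?thesis by (simp add: algebra_simps)
  qed
  show ?thesis using assms unfolding normal_density_def
    by (simp add: e r power2_eq_square[symmetric] field_simps exp_add[symmetric])
qed

lemma gauss_exp: assumes "s > 0"
  shows "gauss_density s (w::real^'n) * exp ((norm w)^2/(4 * s)) = sqrt 2 ^ CARD('n) * gauss_density (2 * s) w"
proof -
  have "exp ((norm w)^2/(4 * s)) = (\<Prod>i\<in>UNIV. exp ((w$i)^2/(4 * s)))"
    by (simp add: norm_vec_sq sum_divide_distrib exp_sum)
  then show ?thesis
    unfolding gauss_density_def
    by (simp add: prod.distrib[symmetric] normal_exp[OF assms]) (simp add: prod.distrib)
qed




lemma gauss_meas[measurable]: "gauss_density s \<in> borel_measurable borel"
  unfolding gauss_density_def normal_density_def by measurable

lemma dist_one: assumes "prob_space M" "distributed M lborel X (\<lambda>x. ennreal (g x))"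
  shows "(\<integral>\<^sup>+x. ennreal (g x) \<partial>lborel) = 1"
proof -
  have d: "distr M lborel X = density lborel (\<lambda>x. ennreal (g x))" and X: "X \<in> measurable M lborel"
    using assms(2) unfolding distributed_def by auto
  have "prob_space (distr M lborel X)" using assms(1) X by (rule prob_space.prob_space_distr)
  then have "emeasure (distr M lborel X) (space (distr M lborel X)) = 1"
    by (rule prob_space.emeasure_space_1)
  then show ?thesis unfolding d
    using assms(2) unfolding distributed_def
    by (simp add: emeasure_density)
qed

lemma moment: fixes h :: real assumes h: "h > 0"
  and one: "(\<integral>\<^sup>+x. ennreal (gauss_density (2*h) (x::real^'n)) \<partial>lborel) = 1"
  shows "(\<integral>\<^sup>+w. ennreal (gauss_density h (w::real^'n)) * ennreal (norm w ^ (2*j)) \<partial>lborel)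
           \<le> ennreal (h^j * 4^j * fact j * sqrt 2 ^ CARD('n))"
proof -
  define C where "C = h^j * 4^j * fact j * sqrt 2 ^ CARD('n)"
  have C0: "C \<ge> 0" using h unfolding C_def by simp
  have pw: "gauss_density h w * norm w ^ (2*j) \<le> C * gauss_density (2*h) w" for w :: "real^'n"
  proof -
    have "norm w ^ (2*j) = (4*h)^j * ((norm w)^2/(4*h))^j"
      using h by (simp add: power_mult power_divide field_simps power_mult_distrib flip: power_mult mult.commute)
    also have "\<dots> \<le> (4*h)^j * (fact j * exp ((norm w)^2/(4*h)))"
      using h by (intro mult_left_mono pow_le_fact_exp) auto
    finally have "gauss_density h w * norm w ^ (2*j) \<le> gauss_density h w * ((4*h)^j * (fact j * exp ((norm w)^2/(4*h))))"
      by (intro mult_left_mono gauss_nonneg)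
    also have "\<dots> = (4*h)^j * fact j * (gauss_density h w * exp ((norm w)^2/(4*h)))"
      by (simp add: algebra_simps)
    also have "\<dots> = C * gauss_density (2*h) w"
      using gauss_exp[OF h, of w] by (simp add: C_def power_mult_distrib algebra_simps)
    finally show ?thesis .
  qed
  have "(\<integral>\<^sup>+w. ennreal (gauss_density h (w::real^'n)) * ennreal (norm w ^ (2*j)) \<partial>lborel)
      \<le> (\<integral>\<^sup>+w. ennreal C * ennreal (gauss_density (2*h) (w::real^'n)) \<partial>lborel)"
  proof (rule nn_integral_mono)
    fix w :: "real^'n"
    have "ennreal (gauss_density h w) * ennreal (norm w ^ (2*j)) = ennreal (gauss_density h w * norm w ^ (2*j))"
      by (rule ennreal_mult[symmetric]) (auto intro: gauss_nonneg)
    also have "\<dots> \<le> ennreal (C * gauss_density (2*h) w)" using pw by (rule ennreal_leI)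
    also have "\<dots> = ennreal C * ennreal (gauss_density (2*h) w)" using C0 by (rule ennreal_mult) (rule gauss_nonneg)
    finally show "ennreal (gauss_density h w) * ennreal (norm w ^ (2*j)) \<le> ennreal C * ennreal (gauss_density (2*h) w)" .
  qed
  also have "\<dots> = ennreal C * (\<integral>\<^sup>+w. ennreal (gauss_density (2*h) (w::real^'n)) \<partial>lborel)"
    by (rule nn_integral_cmult) measurable
  also have "\<dots> = ennreal C" using one by simp
  finally show ?thesis unfolding C_def .
qed




lemma gamma_shift:
  "Gamma_c V \<gamma> c x (y + s *\<^sub>R w) = Gamma_c V \<gamma> c x y + s * (((\<gamma>/2) *\<^sub>R x + c *\<^sub>R y) \<bullet> w) + c * s^2 / 2 * (norm w)^2"
  unfolding Gamma_c_def power2_norm_eq_inner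
  by (simp add: inner_add_left inner_add_right algebra_simps power2_eq_square inner_commute)

lemma gamma_lower:
  fixes x y :: "real^'n"
  assumes g: "\<gamma> > 0" and c: "c \<ge> 1" and V: "V x \<ge> 0"
  shows "(norm ((\<gamma>/2) *\<^sub>R x + c *\<^sub>R y))^2 \<le> (8 + 12*c^2) * Gamma_c V \<gamma> c x y"
    and "Gamma_c V \<gamma> c x y \<ge> 1"
proof -
  define a where "a = norm x"
  define b where "b = norm y"
  define d where "d = x \<bullet> y"
  have a0: "a \<ge> 0" and b0: "b \<ge> 0" using a_def b_def by auto
  have dab: "\<bar>d\<bar> \<le> a * b" unfolding a_def b_def d_def by (rule Cauchy_Schwarz_ineq2)
  have u: "(norm ((\<gamma>/2) *\<^sub>R x + c *\<^sub>R y))^2 = \<gamma>^2/4 * a^2 + \<gamma> * c * d + c^2 * b^2"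
    unfolding a_def b_def d_def power2_norm_eq_inner
    by (simp add: inner_add_left inner_add_right inner_commute algebra_simps power2_eq_square)
  have Gm: "Gamma_c V \<gamma> c x y = \<gamma>^2/4 * a^2 + V x + \<gamma>/2 * d + c/2 * b^2 + 1"
    unfolding Gamma_c_def a_def b_def d_def by simp
  have sq: "0 \<le> (3*\<gamma>*a - 4*b)^2" by simp
  have sq2: "0 \<le> (\<gamma>*a/2 - c*b)^2" by simp
  have d1: "\<gamma>/2 * d \<ge> - (\<gamma>/2 * (a*b))"
  proof -
    have "\<gamma>/2 * (-d) \<le> \<gamma>/2 * (a*b)" using dab g by (intro mult_left_mono) auto
    then show ?thesis by simp
  qed
  have d2: "\<gamma> * c * d \<le> \<gamma> * c * (a*b)" using dab g c by (intro mult_left_mono) auto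
  have Q: "\<gamma>^2/4 * a^2 + \<gamma>/2 * d + c/2 * b^2 \<ge> \<gamma>^2/16 * a^2 + b^2/6"
  proof -
    have "\<gamma>/2 * (a*b) \<le> 3*\<gamma>^2*a^2/16 + b^2/3" using sq by (simp add: power2_eq_square algebra_simps)
    moreover have "c/2 * b^2 \<ge> 1/2 * b^2" using c by (intro mult_right_mono) auto
    ultimately show ?thesis using d1 by (simp add: power2_eq_square algebra_simps)
  qed
  have U: "(norm ((\<gamma>/2) *\<^sub>R x + c *\<^sub>R y))^2 \<le> \<gamma>^2/2 * a^2 + 2 * c^2 * b^2"
    using u d2 sq2 by (simp add: power2_eq_square algebra_simps)
  have "\<gamma>^2/2 * a^2 + 2 * c^2 * b^2 \<le> (8 + 12*c^2) * (\<gamma>^2/16 * a^2 + b^2/6)"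
  proof -
    have h1: "0 \<le> 12*c^2*(\<gamma>^2/16*a^2) + 8*(b^2/6)" by simp
    have eq: "(8 + 12*c^2) * (\<gamma>^2/16 * a^2 + b^2/6) = \<gamma>^2/2 * a^2 + 2 * c^2 * b^2 + (12*c^2*(\<gamma>^2/16*a^2) + 8*(b^2/6))"
      by (simp add: algebra_simps)
    show ?thesis using h1 eq by linarith
  qed
  also have "\<dots> \<le> (8 + 12*c^2) * Gamma_c V \<gamma> c x y"
    using Q V unfolding Gm by (intro mult_left_mono) auto
  finally show "(norm ((\<gamma>/2) *\<^sub>R x + c *\<^sub>R y))^2 \<le> (8 + 12*c^2) * Gamma_c V \<gamma> c x y" using U by linarith
  have "0 \<le> \<gamma>^2/16 * a^2 + b^2/6" by simp
  then show "Gamma_c V \<gamma> c x y \<ge> 1" using Q V unfolding Gm by linarith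
qed

lemma gamma_pair:
  fixes x y w :: "real^'n"
  assumes g: "\<gamma> > 0" and c: "c \<ge> 1" and V: "V x \<ge> 0" and s: "s \<ge> 0"
  defines "G \<equiv> Gamma_c V \<gamma> c x y"
  defines "L \<equiv> s^2 * (8 + 12*c^2) + c * s^2 / 2"
  shows "(Gamma_c V \<gamma> c x (y + s *\<^sub>R w) ^ l + Gamma_c V \<gamma> c x (y + s *\<^sub>R (-w)) ^ l) / 2
          \<le> G^l + 4^l * TT G (L * (norm w)^2) l"
proof -
  define u where "u = (\<gamma>/2) *\<^sub>R x + c *\<^sub>R y"
  define a where "a = s * (u \<bullet> w)"
  define q where "q = c * s^2 / 2 * (norm w)^2"
  define e where "e = L * (norm w)^2"
  have G1: "G \<ge> 1" unfolding G_def using gamma_lower(2)[of \<gamma> c V x y] g c V by blast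
  have e1: "Gamma_c V \<gamma> c x (y + s *\<^sub>R w) = G + q + a"
    unfolding G_def q_def a_def u_def gamma_shift by simp
  have e2: "Gamma_c V \<gamma> c x (y + s *\<^sub>R (-w)) = G + q - a"
    unfolding G_def q_def a_def u_def gamma_shift by simp
  have q0: "0 \<le> q" using c unfolding q_def by simp
  have qe: "q \<le> e" unfolding q_def e_def L_def by (simp add: algebra_simps)
  have e0: "0 \<le> e" using c unfolding e_def L_def by simp
  have "a^2 = s^2 * (u \<bullet> w)^2" unfolding a_def by (simp add: power_mult_distrib)
  also have "\<dots> \<le> s^2 * ((norm u)^2 * (norm w)^2)"
  proof -
    have "\<bar>u \<bullet> w\<bar> \<le> norm u * norm w" by (rule Cauchy_Schwarz_ineq2)
    then have "\<bar>u \<bullet> w\<bar>^2 \<le> (norm u * norm w)^2"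
      by (intro power_mono) auto
    then have "(u \<bullet> w)^2 \<le> (norm u * norm w)^2" by simp
    then show ?thesis by (intro mult_left_mono) (auto simp: power_mult_distrib)
  qed
  also have "\<dots> \<le> s^2 * (((8 + 12*c^2) * G) * (norm w)^2)"
    using gamma_lower(1)[of \<gamma> c V x y] g c V unfolding u_def G_def
    by (intro mult_left_mono mult_right_mono) auto
  also have "\<dots> \<le> G * e"
  proof -
    have "s^2 * (8 + 12*c^2) \<le> L" unfolding L_def using c by simp
    then have "s^2 * (8 + 12*c^2) * (G * (norm w)^2) \<le> L * (G * (norm w)^2)"
      using G1 by (intro mult_right_mono) auto
    then show ?thesis unfolding e_def by (simp add: algebra_simps)
  qed
  finally have ae: "a^2 \<le> G * e" .
  have "((G+q+a)^l + (G+q-a)^l)/2 \<le> G^l + 4^l * TT G e l"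
    using alg_main[of G e q a l] G1 e0 q0 qe ae by auto
  then show ?thesis unfolding e1 e2 e_def .
qed




lemma lborel_uminus_eucl: "distr lborel borel uminus = (lborel :: ('a::euclidean_space) measure)"
  by (subst lborel_affine[of "-1" 0]) (auto simp: density_1 one_ennreal_def[symmetric])

lemma nn_sym:
  fixes F :: "'a::euclidean_space \<Rightarrow> ennreal"
  assumes "F \<in> borel_measurable borel"
  shows "(\<integral>\<^sup>+x. F x \<partial>lborel) = (\<integral>\<^sup>+x. F (-x) \<partial>lborel)"
proof -
  have "(\<integral>\<^sup>+x. F x \<partial>lborel) = (\<integral>\<^sup>+x. F x \<partial>(distr lborel borel uminus))"
    by (simp add: lborel_uminus_eucl)
  also have "\<dots> = (\<integral>\<^sup>+x. F (-x) \<partial>lborel)"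
    using assms by (subst nn_integral_distr) auto
  finally show ?thesis .
qed

lemma TT_expand:
  fixes g G L r :: real
  shows "g * (G^l + 4^l * TT G (L * r^2) l) = g * G^l + (\<Sum>i<l. (4^l * G^i * L^(l-i)) * (g * r^(2*(l-i))))"
  unfolding TT_def distrib_left sum_distrib_left
  by (intro arg_cong2[where f="(+)"] refl sum.cong) (simp_all add: power_mult_distrib power_mult[symmetric] mult_ac)

lemma inner_bound:
  fixes g f :: "real^'n \<Rightarrow> real" and G L :: real and m :: "nat \<Rightarrow> real"
  assumes gm[measurable]: "g \<in> borel_measurable borel" and g0: "\<And>w. g w \<ge> 0"
    and geven: "\<And>w. g (-w) = g w"
    and gone: "(\<integral>\<^sup>+w. ennreal (g w) \<partial>lborel) = 1"
    and mom: "\<And>j. (\<integral>\<^sup>+w. ennreal (g w) * ennreal (norm w ^ (2*j)) \<partial>lborel) \<le> ennreal (m j)"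
    and fm[measurable]: "f \<in> borel_measurable borel" and f0: "\<And>w. f w \<ge> 0"
    and G0: "G \<ge> 0" and L0: "L \<ge> 0"
    and fb: "\<And>w. (f w + f (-w))/2 \<le> G^l + 4^l * TT G (L * (norm w)^2) l"
  shows "(\<integral>\<^sup>+w. ennreal (g w) * ennreal (f w) \<partial>lborel)
          \<le> ennreal (G^l) + (\<Sum>i<l. ennreal (4^l * G^i * L^(l-i)) * ennreal (m (l-i)))"
proof -
  define I where "I = (\<integral>\<^sup>+w. ennreal (g w) * ennreal (f w) \<partial>lborel)"
  define Bnd where "Bnd w = ennreal (g w) * ennreal (G^l)
      + (\<Sum>i<l. ennreal (4^l * G^i * L^(l-i)) * (ennreal (g w) * ennreal (norm w ^ (2*(l-i)))))" for w :: "real^'n"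
  have I2: "I = (\<integral>\<^sup>+w. ennreal (g w) * ennreal (f (-w)) \<partial>lborel)"
    unfolding I_def by (subst nn_sym) (auto simp: geven)
  have pw: "ennreal (g w) * ennreal (f w) + ennreal (g w) * ennreal (f (-w)) \<le> 2 * Bnd w" for w
  proof -
    have c0: "0 \<le> 4^l * G^i * L^(l-i)" for i using G0 L0 by simp
    have "ennreal (g w) * ennreal (f w) + ennreal (g w) * ennreal (f (-w)) = ennreal (g w * (f w + f (-w)))"
      using g0[of w] f0[of w] f0[of "-w"] by (simp add: ennreal_mult[symmetric] distrib_left ennreal_plus)
    also have "\<dots> \<le> ennreal (2 * (g w * (G^l + 4^l * TT G (L * (norm w)^2) l)))"
    proof (intro ennreal_leI)
      have "g w * (f w + f (-w)) \<le> g w * (2 * (G^l + 4^l * TT G (L * (norm w)^2) l))"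
        using fb[of w] g0[of w] by (intro mult_left_mono) auto
      then show "g w * (f w + f (-w)) \<le> 2 * (g w * (G^l + 4^l * TT G (L * (norm w)^2) l))"
        by (simp add: mult_ac)
    qed
    also have "\<dots> = 2 * ennreal (g w * G^l + (\<Sum>i<l. (4^l * G^i * L^(l-i)) * (g w * norm w ^(2*(l-i)))))"
      unfolding TT_expand by (subst ennreal_mult') simp_all
    also have "ennreal (g w * G^l + (\<Sum>i<l. (4^l * G^i * L^(l-i)) * (g w * norm w ^(2*(l-i))))) = Bnd w"
    proof -
      have t0: "0 \<le> 4^l * G^i * L^(l-i) * (g w * norm w ^(2*(l-i)))" for i
        using c0[of i] g0[of w] by simp
      have B: "Bnd w = ennreal (g w * G^l) + (\<Sum>i<l. ennreal (4^l * G^i * L^(l-i) * (g w * norm w ^(2*(l-i)))))"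
        unfolding Bnd_def using g0[of w] G0 c0 by (simp add: ennreal_mult)
      also have "\<dots> = ennreal (g w * G^l) + ennreal (\<Sum>i<l. 4^l * G^i * L^(l-i) * (g w * norm w ^(2*(l-i))))"
        using t0 by (subst sum_ennreal) auto
      also have "\<dots> = ennreal (g w * G^l + (\<Sum>i<l. 4^l * G^i * L^(l-i) * (g w * norm w ^(2*(l-i)))))"
        using t0 g0[of w] G0 by (subst ennreal_plus) (auto intro: sum_nonneg)
      finally show ?thesis by simp
    qed
    finally show ?thesis .
  qed
  have "I + I = (\<integral>\<^sup>+w. ennreal (g w) * ennreal (f w) + ennreal (g w) * ennreal (f (-w)) \<partial>lborel)"
    by (subst nn_integral_add) (auto simp: I_def I2[symmetric])
  also have "\<dots> \<le> (\<integral>\<^sup>+w. 2 * Bnd w \<partial>lborel)"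
    by (intro nn_integral_mono pw)
  also have "\<dots> = 2 * (\<integral>\<^sup>+w. Bnd w \<partial>lborel)"
    by (rule nn_integral_cmult) (simp add: Bnd_def)
  also have "(\<integral>\<^sup>+w. Bnd w \<partial>lborel) = ennreal (G^l) * (\<integral>\<^sup>+w. ennreal (g w) \<partial>lborel)
      + (\<Sum>i<l. ennreal (4^l * G^i * L^(l-i)) * (\<integral>\<^sup>+w. ennreal (g w) * ennreal (norm w ^ (2*(l-i))) \<partial>lborel))"
    unfolding Bnd_def
    by (simp add: nn_integral_add nn_integral_sum nn_integral_cmult nn_integral_multc mult.commute)
  also have "\<dots> \<le> ennreal (G^l) + (\<Sum>i<l. ennreal (4^l * G^i * L^(l-i)) * ennreal (m (l-i)))"
    unfolding gone by (auto intro!: add_mono sum_mono mult_left_mono mom)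
  finally have "I + I \<le> 2 * (ennreal (G^l) + (\<Sum>i<l. ennreal (4^l * G^i * L^(l-i)) * ennreal (m (l-i))))"
    by (simp add: mult_left_mono)
  then have "2 * I \<le> 2 * (ennreal (G^l) + (\<Sum>i<l. ennreal (4^l * G^i * L^(l-i)) * ennreal (m (l-i))))"
    by (metis mult_2)
  then show ?thesis unfolding I_def by (subst (asm) ennreal_mult_le_mult_iff) auto
qed




fun ulaD :: "(real^'n \<Rightarrow> real^'n) \<Rightarrow> real \<Rightarrow> real \<Rightarrow> real^'n \<Rightarrow> real^'n
            \<Rightarrow> (nat \<Rightarrow> real^'n) \<Rightarrow> nat \<Rightarrow> (real^'n) \<times> (real^'n)" where
  "ulaD gV \<gamma> \<delta> x0 p0 d 0 = (x0, p0)"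
| "ulaD gV \<gamma> \<delta> x0 p0 d (Suc k) =
     (let xk = fst (ulaD gV \<gamma> \<delta> x0 p0 d k);
          pk = snd (ulaD gV \<gamma> \<delta> x0 p0 d k);
          \<eta> = (1 / sqrt \<delta>) *\<^sub>R d k
      in (xk + \<delta> *\<^sub>R pk,
          (1 - \<gamma> * \<delta>) *\<^sub>R pk - \<delta> *\<^sub>R gV xk + sqrt (2 * \<gamma> * \<delta>) *\<^sub>R \<eta>))"

lemma ula_eq: "ula gV \<gamma> \<delta> x0 p0 B j \<omega> =
   ulaD gV \<gamma> \<delta> x0 p0 (\<lambda>i. B ((real i + 1) * \<delta>) \<omega> - B (real i * \<delta>) \<omega>) j"
  by (induction j) (simp_all add: Let_def)

lemma ulaD_cong: "(\<And>i. i < j \<Longrightarrow> d i = d' i) \<Longrightarrow> ulaD gV \<gamma> \<delta> x0 p0 d j = ulaD gV \<gamma> \<delta> x0 p0 d' j"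
  by (induction j) (simp_all add: Let_def)

lemma ulaD_meas:
  assumes gm[measurable]: "gV \<in> borel_measurable borel"
  shows "j \<le> k \<Longrightarrow> (\<lambda>f. ulaD gV \<gamma> \<delta> x0 p0 f j) \<in> borel_measurable (PiM {..<k} (\<lambda>_. borel))"
proof (induction j)
  case 0
  then show ?case by simp
next
  case (Suc j)
  then have IH[measurable]: "(\<lambda>f. ulaD gV \<gamma> \<delta> x0 p0 f j) \<in> borel_measurable (PiM {..<k} (\<lambda>_. borel))"
    by simp
  have jk: "j \<in> {..<k}" using Suc by simp
  have [measurable]: "(\<lambda>f. f j) \<in> borel_measurable (PiM {..<k} (\<lambda>_. borel :: (real^'n) measure))"
    using jk by (rule measurable_component_singleton)
  have IH2[measurable]: "(\<lambda>f. ulaD gV \<gamma> \<delta> x0 p0 f j) \<in> measurable (PiM {..<k} (\<lambda>_. borel)) (borel \<Otimes>\<^sub>M borel)"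
    using IH by (simp add: borel_prod)
  have [measurable]: "(\<lambda>f. fst (ulaD gV \<gamma> \<delta> x0 p0 f j)) \<in> borel_measurable (PiM {..<k} (\<lambda>_. borel))"
    by measurable
  have [measurable]: "(\<lambda>f. snd (ulaD gV \<gamma> \<delta> x0 p0 f j)) \<in> borel_measurable (PiM {..<k} (\<lambda>_. borel))"
    by measurable
  have "(\<lambda>f. ulaD gV \<gamma> \<delta> x0 p0 f (Suc j)) \<in> measurable (PiM {..<k} (\<lambda>_. borel)) (borel \<Otimes>\<^sub>M borel)"
    by (simp add: Let_def) measurable
  then show ?case by (simp add: borel_prod)
qed




theorem lemma2:
  fixes V :: "real^'n \<Rightarrow> real"
    and gV :: "real^'n \<Rightarrow> real^'n"
    and H :: "real^'n \<Rightarrow> real^'n \<Rightarrow> real^'n"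
    and \<gamma> \<nu> \<alpha> \<beta> \<delta> :: real
    and M :: "'a measure"
    and B :: "real \<Rightarrow> 'a \<Rightarrow> real^'n"
    and x0 p0 :: "real^'n"
    and l :: nat
  assumes gamma_pos: "\<gamma> > 0"
    and A1a: "\<And>x. V x \<ge> 0"
    and grad: "\<And>x. GDERIV V x :> gV x"
    and hess: "\<And>x. (gV has_derivative H x) (at x)"
    and nu_pos: "\<nu> > 0"
    and A1b: "\<And>x. onorm (H x) \<le> \<nu>"
    and A1c: "C_inf_poly V"
    and alpha_pos: "\<alpha> > 0"
    and beta: "0 < \<beta>" "\<beta> < 1"
    and A2: "\<And>x. (1/2) * (gV x \<bullet> x) \<ge> \<beta> * V x + \<gamma>\<^sup>2 * C_beta \<beta> * (norm x)\<^sup>2 - \<alpha>"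
    and S: "0 < \<delta>" "\<delta> \<le> 1 / \<gamma>" "\<delta> \<le> \<gamma> / (2 * \<nu>)"
           "\<delta> \<le> (D_const \<gamma> \<nu> \<beta> + 1 - sqrt ((D_const \<gamma> \<nu> \<beta>)\<^sup>2 + 1)) / \<gamma>"
    and BM: "std_brownian_motion M B"
    and l_pos: "l > 0"
  shows "\<exists>C2>0. \<forall>(k::nat) (t::real). real k * \<delta> \<le> t \<and> t \<le> (real k + 1) * \<delta> \<longrightarrow>
    (let c = (1 - \<gamma> * \<delta> / 2) / (1 - \<gamma> * \<delta>);
         \<xi> = (\<lambda>j \<omega>. fst (ula gV \<gamma> \<delta> x0 p0 B j \<omega>));
         \<rho> = (\<lambda>j \<omega>. snd (ula gV \<gamma> \<delta> x0 p0 B j \<omega>));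
         \<tau> = (\<lambda>\<omega>. (1 - \<gamma> * \<delta>) *\<^sub>R \<rho> k \<omega> - \<delta> *\<^sub>R gV (\<xi> k \<omega>));
         R = (\<lambda>\<omega>. \<tau> \<omega> + sqrt (2 * \<gamma>) *\<^sub>R (B t \<omega> - B (real k * \<delta>) \<omega>))
     in (\<integral>\<^sup>+ \<omega>. ennreal ((Gamma_c V \<gamma> c (\<xi> (Suc k) \<omega>) (R \<omega>)) ^ l) \<partial>M)
        \<le> (\<integral>\<^sup>+ \<omega>. ennreal ((Gamma_c V \<gamma> c (\<xi> (Suc k) \<omega>) (\<tau> \<omega>)) ^ l) \<partial>M)
           + ennreal C2 * (\<Sum>i<l. ennreal ((t - real k * \<delta>) ^ (l - i))
                 * (\<integral>\<^sup>+ \<omega>. ennreal ((Gamma_c V \<gamma> c (\<xi> (Suc k) \<omega>) (\<tau> \<omega>)) ^ i) \<partial>M)))"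
proof -
  interpret P: prob_space M using BM unfolding std_brownian_motion_def by auto
  have Bm: "\<And>t. t \<ge> 0 \<Longrightarrow> B t \<in> borel_measurable M"
    using BM unfolding std_brownian_motion_def by auto
  have Bd: "\<And>s t. 0 \<le> s \<Longrightarrow> s < t \<Longrightarrow>
      distributed M lborel (\<lambda>\<omega>. B t \<omega> - B s \<omega>) (\<lambda>x. ennreal (gauss_density (t - s) x))"
    using BM unfolding std_brownian_motion_def by auto
  have Bi: "\<And>(ts::nat \<Rightarrow> real) n. 0 \<le> ts 0 \<Longrightarrow> (\<forall>i<n. ts i \<le> ts (Suc i)) \<Longrightarrow>
      P.indep_vars (\<lambda>_. borel) (\<lambda>i \<omega>. B (ts (Suc i)) \<omega> - B (ts i) \<omega>) {..<n}"
    using BM unfolding std_brownian_motion_def by auto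
  have Vc: "continuous_on UNIV V"
  proof (intro continuous_at_imp_continuous_on ballI)
    fix x show "isCont V x"
      using grad[of x] unfolding gderiv_def by (rule has_derivative_continuous)
  qed
  have gc: "continuous_on UNIV gV"
  proof (intro continuous_at_imp_continuous_on ballI)
    fix x show "isCont gV x" using hess[of x] by (rule has_derivative_continuous)
  qed
  have Vm[measurable]: "V \<in> borel_measurable borel" using Vc by (rule borel_measurable_continuous_onI)
  have gm[measurable]: "gV \<in> borel_measurable borel" using gc by (rule borel_measurable_continuous_onI)
  have gd: "\<gamma> * \<delta> < 1"
  proof -
    define D where "D = D_const \<gamma> \<nu> \<beta>"
    have "D < sqrt (D^2 + 1)" by (rule real_less_rsqrt) simp
    then have "(D + 1 - sqrt (D^2 + 1)) / \<gamma> < 1 / \<gamma>" using gamma_pos by (intro divide_strict_right_mono) auto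
    then have "\<delta> < 1 / \<gamma>" using S(4) unfolding D_def by linarith
    then show ?thesis using gamma_pos by (simp add: field_simps)
  qed
  define c where "c = (1 - \<gamma> * \<delta> / 2) / (1 - \<gamma> * \<delta>)"
  have c1: "c \<ge> 1" unfolding c_def using gd gamma_pos S(1) by (simp add: field_simps)
  have Gpos: "\<And>x y. 1 \<le> Gamma_c V \<gamma> c x y"
    using gamma_lower(2) gamma_pos c1 A1a by blast
  define s where "s = sqrt (2 * \<gamma>)"
  have s0: "s \<ge> 0" unfolding s_def using gamma_pos by simp
  define L where "L = s^2 * (8 + 12*c^2) + c * s^2 / 2"
  have L0: "L \<ge> 0" unfolding L_def using c1 gamma_pos by simp
  define C2 where "C2 = 4^l * (1+L)^l * 4^l * fact l * sqrt 2 ^ CARD('n)"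
  have C2pos: "C2 > 0" unfolding C2_def using L0 by simp
  show ?thesis
  proof (intro exI[of _ C2] conjI allI impI)
    show "C2 > 0" by (rule C2pos)
    fix k :: nat and t :: real
    assume kt: "real k * \<delta> \<le> t \<and> t \<le> (real k + 1) * \<delta>"
    define \<xi>1 where "\<xi>1 \<omega> = fst (ula gV \<gamma> \<delta> x0 p0 B (Suc k) \<omega>)" for \<omega>
    define \<tau> where "\<tau> \<omega> = (1 - \<gamma> * \<delta>) *\<^sub>R snd (ula gV \<gamma> \<delta> x0 p0 B k \<omega>) - \<delta> *\<^sub>R gV (fst (ula gV \<gamma> \<delta> x0 p0 B k \<omega>))" for \<omega>
    define W where "W \<omega> = B t \<omega> - B (real k * \<delta>) \<omega>" for \<omega>
    define h where "h = t - real k * \<delta>"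
    have h0: "h \<ge> 0" using kt unfolding h_def by simp
    have key: "(\<integral>\<^sup>+\<omega>. ennreal (Gamma_c V \<gamma> c (\<xi>1 \<omega>) (\<tau> \<omega> + s *\<^sub>R W \<omega>) ^ l) \<partial>M)
        \<le> (\<integral>\<^sup>+\<omega>. ennreal (Gamma_c V \<gamma> c (\<xi>1 \<omega>) (\<tau> \<omega>) ^ l) \<partial>M)
         + ennreal C2 * (\<Sum>i<l. ennreal (h ^ (l - i)) * (\<integral>\<^sup>+\<omega>. ennreal (Gamma_c V \<gamma> c (\<xi>1 \<omega>) (\<tau> \<omega>) ^ i) \<partial>M))"
    proof (cases "h = 0")
      case True
      then have "t = real k * \<delta>" unfolding h_def by simp
      then have "W \<omega> = 0" for \<omega> unfolding W_def by simp
      then show ?thesis by (simp add: add_increasing2)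
    next
      case False
      then have hpos: "h > 0" using h0 by simp
      have kd0: "real k * \<delta> \<ge> 0" using S(1) by simp
      have ktl: "real k * \<delta> < t" using hpos unfolding h_def by simp
      define ts where "ts i = (if i \<le> k then real i * \<delta> else t)" for i
      define D where "D i \<omega> = B (ts (Suc i)) \<omega> - B (ts i) \<omega>" for i \<omega>
      have ind: "P.indep_vars (\<lambda>_. borel) D {..<Suc k}"
        unfolding D_def
      proof (rule Bi)
        show "0 \<le> ts 0" unfolding ts_def by simp
        show "\<forall>i<Suc k. ts i \<le> ts (Suc i)"
        proof (intro allI impI)
          fix i assume ik: "i < Suc k"
          show "ts i \<le> ts (Suc i)"
          proof (cases "Suc i \<le> k")
            case True then show ?thesis using S(1) unfolding ts_def by (simp add: mult_right_mono)
          next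
            case False with ik have "i = k" by simp
            then show ?thesis using kt unfolding ts_def by simp
          qed
        qed
      qed
      have ir: "P.indep_var (PiM {..<k} (\<lambda>_. borel)) (\<lambda>\<omega>. restrict (\<lambda>i. D i \<omega>) {..<k})
                            (PiM {k} (\<lambda>_. borel)) (\<lambda>\<omega>. restrict (\<lambda>i. D i \<omega>) {k})"
        by (rule P.indep_var_restrict[OF ind]) auto
      define F where "F f = (fst (ulaD gV \<gamma> \<delta> x0 p0 f k) + \<delta> *\<^sub>R snd (ulaD gV \<gamma> \<delta> x0 p0 f k),
          (1 - \<gamma> * \<delta>) *\<^sub>R snd (ulaD gV \<gamma> \<delta> x0 p0 f k) - \<delta> *\<^sub>R gV (fst (ulaD gV \<gamma> \<delta> x0 p0 f k)))" for f
      have Um[measurable]: "(\<lambda>f. ulaD gV \<gamma> \<delta> x0 p0 f k) \<in> measurable (PiM {..<k} (\<lambda>_. borel)) (borel \<Otimes>\<^sub>M borel)"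
        using ulaD_meas[OF gm, of k k \<gamma> \<delta> x0 p0] by (simp add: borel_prod)
      have "F \<in> measurable (PiM {..<k} (\<lambda>_. borel)) (borel \<Otimes>\<^sub>M borel)"
        unfolding F_def by measurable
      then have Fm: "F \<in> measurable (PiM {..<k} (\<lambda>_. borel)) borel" by (simp add: borel_prod)
      define Y2 where "Y2 f = (f k, 0 :: real^'n)" for f :: "nat \<Rightarrow> real^'n"
      have "Y2 \<in> measurable (PiM {k} (\<lambda>_. borel :: (real^'n) measure)) (borel \<Otimes>\<^sub>M borel)"
      proof -
        have [measurable]: "(\<lambda>f. f k) \<in> measurable (PiM {k} (\<lambda>_. borel :: (real^'n) measure)) borel"
          by (rule measurable_component_singleton) simp
        show ?thesis unfolding Y2_def by measurable
      qed
      then have Y2m: "Y2 \<in> measurable (PiM {k} (\<lambda>_. borel :: (real^'n) measure)) borel" by (simp add: borel_prod)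
      define X where "X \<omega> = (\<xi>1 \<omega>, \<tau> \<omega>)" for \<omega>
      define W2 where "W2 \<omega> = (W \<omega>, 0 :: real^'n)" for \<omega>
      have eqX: "F \<circ> (\<lambda>\<omega>. restrict (\<lambda>i. D i \<omega>) {..<k}) = X"
      proof
        fix \<omega>
        have "ula gV \<gamma> \<delta> x0 p0 B k \<omega> = ulaD gV \<gamma> \<delta> x0 p0 (\<lambda>i. B ((real i + 1) * \<delta>) \<omega> - B (real i * \<delta>) \<omega>) k"
          by (rule ula_eq)
        also have "\<dots> = ulaD gV \<gamma> \<delta> x0 p0 (restrict (\<lambda>i. D i \<omega>) {..<k}) k"
          by (rule ulaD_cong) (simp add: D_def ts_def add.commute)
        finally have u: "ula gV \<gamma> \<delta> x0 p0 B k \<omega> = ulaD gV \<gamma> \<delta> x0 p0 (restrict (\<lambda>i. D i \<omega>) {..<k}) k" .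
        show "(F \<circ> (\<lambda>\<omega>. restrict (\<lambda>i. D i \<omega>) {..<k})) \<omega> = X \<omega>"
          unfolding X_def \<xi>1_def \<tau>_def F_def by (simp add: u[symmetric] Let_def)
      qed
      have eqW: "Y2 \<circ> (\<lambda>\<omega>. restrict (\<lambda>i. D i \<omega>) {k}) = W2"
        by (rule ext) (simp add: Y2_def D_def ts_def W_def W2_def)
      have indXW: "P.indep_var borel X borel W2"
        using P.indep_var_compose[OF ir Fm Y2m] unfolding eqX eqW .
      then have Xm[measurable]: "X \<in> measurable M borel" and W2m[measurable]: "W2 \<in> measurable M borel"
        and jd: "distr M borel X \<Otimes>\<^sub>M distr M borel W2 = distr M (borel \<Otimes>\<^sub>M borel) (\<lambda>\<omega>. (X \<omega>, W2 \<omega>))"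
        unfolding P.indep_var_distribution_eq by auto
      have fstm[measurable]: "fst \<in> measurable (borel :: ((real^'n) \<times> (real^'n)) measure) borel"
        by (subst borel_prod[symmetric]) simp
      have sndm[measurable]: "snd \<in> measurable (borel :: ((real^'n) \<times> (real^'n)) measure) borel"
        by (subst borel_prod[symmetric]) simp
      define Gm where "Gm z = Gamma_c V \<gamma> c (fst z) (snd z)" for z :: "(real^'n) \<times> (real^'n)"
      have Gmm[measurable]: "Gm \<in> borel_measurable borel" unfolding Gm_def Gamma_c_def by measurable
      define Phi where "Phi p = ennreal (Gamma_c V \<gamma> c (fst (fst p)) (snd (fst p) + s *\<^sub>R fst (snd p)) ^ l)"
        for p :: "((real^'n) \<times> (real^'n)) \<times> ((real^'n) \<times> (real^'n))"
      have Phim[measurable]: "Phi \<in> borel_measurable (borel \<Otimes>\<^sub>M borel)" unfolding Phi_def Gamma_c_def by measurable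
      define PX where "PX = distr M borel X"
      define PW where "PW = distr M borel W2"
      have sfW: "sigma_finite_measure PW" unfolding PW_def
        by (intro prob_space_imp_sigma_finite P.prob_space_distr) simp
      have setsP: "sets (PX \<Otimes>\<^sub>M PW) = sets (borel \<Otimes>\<^sub>M borel)"
        by (rule sets_pair_measure_cong) (simp_all add: PX_def PW_def)
      have Phim2: "Phi \<in> borel_measurable (PX \<Otimes>\<^sub>M PW)"
        using Phim by (simp add: measurable_cong_sets[OF setsP refl])
      define Bnd where "Bnd x = ennreal (Gm x ^ l) + (\<Sum>i<l. ennreal C2 * ennreal (h^(l-i)) * ennreal (Gm x ^ i))"
        for x
      have Bndm[measurable]: "Bnd \<in> borel_measurable borel" unfolding Bnd_def by measurable
      have Wd: "distributed M lborel W (\<lambda>x. ennreal (gauss_density h x))"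
        using Bd[OF kd0 ktl] unfolding W_def h_def .
      have Wml: "W \<in> measurable M lborel" using Wd unfolding distributed_def by auto
      have Wdistr: "distr M lborel W = density lborel (\<lambda>x. ennreal (gauss_density h x))"
        using Wd unfolding distributed_def by auto
      have gone: "(\<integral>\<^sup>+w. ennreal (gauss_density h (w::real^'n)) \<partial>lborel) = 1"
        by (rule dist_one[OF P.prob_space_axioms Wd])
      have gone2: "(\<integral>\<^sup>+w. ennreal (gauss_density (2*h) (w::real^'n)) \<partial>lborel) = 1"
      proof -
        have "distributed M lborel (\<lambda>\<omega>. B (2*h) \<omega> - B 0 \<omega>) (\<lambda>x. ennreal (gauss_density (2*h - 0) x))"
          using hpos by (intro Bd) auto
        from dist_one[OF P.prob_space_axioms this] show ?thesis by simp
      qed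
      have inner: "(\<integral>\<^sup>+z. Phi (x, z) \<partial>PW) \<le> Bnd x" for x
      proof -
        define f where "f w = Gamma_c V \<gamma> c (fst x) (snd x + s *\<^sub>R w) ^ l" for w
        have fm[measurable]: "f \<in> borel_measurable borel" unfolding f_def Gamma_c_def by measurable
        have "(\<integral>\<^sup>+z. Phi (x, z) \<partial>PW) = (\<integral>\<^sup>+\<omega>. Phi (x, W2 \<omega>) \<partial>M)"
          unfolding PW_def by (subst nn_integral_distr) (auto intro: measurable_Pair2[OF Phim])
        also have "\<dots> = (\<integral>\<^sup>+\<omega>. ennreal (f (W \<omega>)) \<partial>M)"
          by (simp add: Phi_def W2_def f_def)
        also have "\<dots> = (\<integral>\<^sup>+w. ennreal (f w) \<partial>(distr M lborel W))"
          using Wml by (subst nn_integral_distr) auto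
        also have "\<dots> = (\<integral>\<^sup>+w. ennreal (gauss_density h w) * ennreal (f w) \<partial>lborel)"
          unfolding Wdistr by (subst nn_integral_density) auto
        also have "\<dots> \<le> ennreal (Gm x ^ l) + (\<Sum>i<l. ennreal (4^l * Gm x ^ i * L^(l-i))
                          * ennreal (h^(l-i) * 4^(l-i) * fact (l-i) * sqrt 2 ^ CARD('n)))"
        proof (rule inner_bound)
          show "(gauss_density h :: real^'n \<Rightarrow> real) \<in> borel_measurable borel" by measurable
          show "\<And>w. 0 \<le> gauss_density h (w::real^'n)" by (rule gauss_nonneg)
          show "\<And>w. gauss_density h (-w) = gauss_density h (w::real^'n)" by (rule gauss_even)
          show "(\<integral>\<^sup>+w. ennreal (gauss_density h (w::real^'n)) \<partial>lborel) = 1" by (rule gone)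
          show "\<And>j. (\<integral>\<^sup>+w. ennreal (gauss_density h (w::real^'n)) * ennreal (norm w ^ (2*j)) \<partial>lborel)
                 \<le> ennreal (h^j * 4^j * fact j * sqrt 2 ^ CARD('n))"
            by (rule moment[OF hpos gone2])
          show "f \<in> borel_measurable borel" by (rule fm)
          show "\<And>w. 0 \<le> f w" unfolding f_def
            using Gpos by (meson order_trans zero_le_one zero_le_power)
          show "0 \<le> Gm x" unfolding Gm_def
            using Gpos by (meson order_trans zero_le_one)
          show "0 \<le> L" by (rule L0)
          show "\<And>w. (f w + f (-w))/2 \<le> Gm x ^ l + 4^l * TT (Gm x) (L * (norm w)^2) l"
            unfolding f_def Gm_def L_def using gamma_pair[of \<gamma> c V "fst x" s] gamma_pos c1 A1a s0 by blast
        qed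
        also have "\<dots> \<le> Bnd x"
          unfolding Bnd_def
        proof (intro add_mono order_refl sum_mono)
          fix i assume "i \<in> {..<l}"
          then have il: "l - i \<le> l" by simp
          have G0: "0 \<le> Gm x" unfolding Gm_def
            using Gpos by (meson order_trans zero_le_one)
          have "L^(l-i) * 4^(l-i) * fact (l-i) \<le> (1+L)^l * 4^l * fact l"
          proof -
            have "L^(l-i) \<le> (1+L)^(l-i)" using L0 by (intro power_mono) auto
            also have "\<dots> \<le> (1+L)^l" using L0 il by (intro power_increasing) auto
            finally have a1: "L^(l-i) \<le> (1+L)^l" .
            have a2: "(4::real)^(l-i) \<le> 4^l" using il by (intro power_increasing) auto
            have a3: "(fact (l-i) :: real) \<le> fact l" using il by (rule fact_mono)
            show ?thesis using a1 a2 a3 L0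
              by (intro mult_mono) (auto intro!: mult_nonneg_nonneg)
          qed
          then have "4^l * Gm x ^ i * L^(l-i) * (h^(l-i) * 4^(l-i) * fact (l-i) * sqrt 2 ^ CARD('n))
              \<le> C2 * h^(l-i) * Gm x ^ i"
          proof -
            assume A: "L^(l-i) * 4^(l-i) * fact (l-i) \<le> (1+L)^l * 4^l * fact l"
            have "4^l * Gm x ^ i * L^(l-i) * (h^(l-i) * 4^(l-i) * fact (l-i) * sqrt 2 ^ CARD('n))
                = (4^l * Gm x ^ i * h^(l-i) * sqrt 2 ^ CARD('n)) * (L^(l-i) * 4^(l-i) * fact (l-i))"
              by (simp add: algebra_simps)
            also have "\<dots> \<le> (4^l * Gm x ^ i * h^(l-i) * sqrt 2 ^ CARD('n)) * ((1+L)^l * 4^l * fact l)"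
              using A G0 h0 by (intro mult_left_mono) auto
            also have "\<dots> = C2 * h^(l-i) * Gm x ^ i" by (simp add: C2_def algebra_simps)
            finally show ?thesis .
          qed
          then show "ennreal (4^l * Gm x ^ i * L^(l-i)) * ennreal (h^(l-i) * 4^(l-i) * fact (l-i) * sqrt 2 ^ CARD('n))
              \<le> ennreal C2 * ennreal (h^(l-i)) * ennreal (Gm x ^ i)"
            using G0 h0 L0 C2pos by (simp add: ennreal_mult[symmetric] ennreal_leI)
        qed
        finally show ?thesis .
      qed
      have "(\<integral>\<^sup>+\<omega>. ennreal (Gamma_c V \<gamma> c (\<xi>1 \<omega>) (\<tau> \<omega> + s *\<^sub>R W \<omega>) ^ l) \<partial>M)
          = (\<integral>\<^sup>+\<omega>. Phi (X \<omega>, W2 \<omega>) \<partial>M)"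
        by (simp add: Phi_def X_def W2_def)
      also have "\<dots> = (\<integral>\<^sup>+p. Phi p \<partial>(distr M (borel \<Otimes>\<^sub>M borel) (\<lambda>\<omega>. (X \<omega>, W2 \<omega>))))"
        by (subst nn_integral_distr) auto
      also have "\<dots> = (\<integral>\<^sup>+p. Phi p \<partial>(PX \<Otimes>\<^sub>M PW))" by (simp add: jd PX_def PW_def)
      also have "\<dots> = (\<integral>\<^sup>+x. (\<integral>\<^sup>+z. Phi (x, z) \<partial>PW) \<partial>PX)"
        by (rule sigma_finite_measure.nn_integral_fst[OF sfW Phim2, symmetric])
      also have "\<dots> \<le> (\<integral>\<^sup>+x. Bnd x \<partial>PX)"
        by (intro nn_integral_mono inner)
      also have "\<dots> = (\<integral>\<^sup>+\<omega>. Bnd (X \<omega>) \<partial>M)"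
        unfolding PX_def by (subst nn_integral_distr) auto
      also have "\<dots> = (\<integral>\<^sup>+\<omega>. ennreal (Gm (X \<omega>) ^ l) \<partial>M)
          + (\<Sum>i<l. ennreal C2 * ennreal (h^(l-i)) * (\<integral>\<^sup>+\<omega>. ennreal (Gm (X \<omega>) ^ i) \<partial>M))"
        unfolding Bnd_def
        by (subst nn_integral_add) (auto simp: nn_integral_sum nn_integral_cmult)
      also have "\<dots> = (\<integral>\<^sup>+\<omega>. ennreal (Gamma_c V \<gamma> c (\<xi>1 \<omega>) (\<tau> \<omega>) ^ l) \<partial>M)
         + ennreal C2 * (\<Sum>i<l. ennreal (h ^ (l - i)) * (\<integral>\<^sup>+\<omega>. ennreal (Gamma_c V \<gamma> c (\<xi>1 \<omega>) (\<tau> \<omega>) ^ i) \<partial>M))"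
        by (simp add: Gm_def X_def sum_distrib_left mult.assoc)
      finally show ?thesis .
    qed
    show "let c = (1 - \<gamma> * \<delta> / 2) / (1 - \<gamma> * \<delta>);
         \<xi> = (\<lambda>j \<omega>. fst (ula gV \<gamma> \<delta> x0 p0 B j \<omega>));
         \<rho> = (\<lambda>j \<omega>. snd (ula gV \<gamma> \<delta> x0 p0 B j \<omega>));
         \<tau> = (\<lambda>\<omega>. (1 - \<gamma> * \<delta>) *\<^sub>R \<rho> k \<omega> - \<delta> *\<^sub>R gV (\<xi> k \<omega>));
         R = (\<lambda>\<omega>. \<tau> \<omega> + sqrt (2 * \<gamma>) *\<^sub>R (B t \<omega> - B (real k * \<delta>) \<omega>))
     in (\<integral>\<^sup>+ \<omega>. ennreal ((Gamma_c V \<gamma> c (\<xi> (Suc k) \<omega>) (R \<omega>)) ^ l) \<partial>M)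
        \<le> (\<integral>\<^sup>+ \<omega>. ennreal ((Gamma_c V \<gamma> c (\<xi> (Suc k) \<omega>) (\<tau> \<omega>)) ^ l) \<partial>M)
           + ennreal C2 * (\<Sum>i<l. ennreal ((t - real k * \<delta>) ^ (l - i))
                 * (\<integral>\<^sup>+ \<omega>. ennreal ((Gamma_c V \<gamma> c (\<xi> (Suc k) \<omega>) (\<tau> \<omega>)) ^ i) \<partial>M))"
      using key unfolding Let_def c_def[symmetric] \<xi>1_def \<tau>_def W_def s_def h_def .
  qed
qed

end
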